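(* Let $\Sigma=(\mathbf{x},\mathbf{F})$ be an LP seed of rank $n\ge2$ satisfying Condition 1.2. Let $y=\sum_{m=a}^{b}c_mx_1^m$ with $a\le b$ integers, $c_m\in R^{st}[x_2,x'_2,\dots,x_n,x'_n]$ and $c_a\ne0$. Then $LT(y)=\varphi(c_a)\,x_1^a$.
   Context: $R$ is a unique factorization domain containing $\mathbb{Z}$ and $\mathcal{F}$ is the field of rational functions in $n$ variables over $\mathrm{Frac}(R)$. An LP seed of rank $n$ is a pair $(\mathbf{x},\mathbf{F})$ where $\mathbf{x}=\{x_1,\dots,x_n\}$ is a transcendence basis of $\mathcal{F}$ over $\mathrm{Frac}(R)$ and $\mathbf{F}=\{F_1,\dots,F_n\}$ are irreducible polynomials in $R[x_1,\dots,x_n]$ with $x_j\nmid F_i$ for all $i,j$ and $F_i$ not involving $x_i$. The exchange Laurent polynomial is $\hat F_j=F_j/\prod_{k\neq j}x_k^{a_k}$, with $a_k\in\mathbb{Z}_{\ge0}$ maximal such that $F_k^{a_k}$ divides $F_j|_{x_k\leftarrow F_k/x'_k}$ in $R[x_1,\dots,x_{k-1},(x'_k)^{-1},x_{k+1},\dots,x_n]$. Set $x'_j=\hat F_j/x_j$. Lexicographic order on $\mathbb{Z}^n$: $\mathbf{a}\prec\mathbf{a}'$ if the first nonzero entry of $\mathbf{a}'-\mathbf{a}$ is positive; the lexicographically first monomial of a polynomial is its term with $\prec$-smallest exponent vector. Condition 1.2: for every $k\in[1,n]$, with $M_k$ the lexicographically first monomial of $F_k$: (i) $\hat F_k=F_k$;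 (ii) $M_k=x_{k+1}^{v_{k+1,k}}\cdots x_n^{v_{n,k}}$ (coefficient $1$) with $v_{\cdot,k}\in\mathbb{Z}_{\ge0}$ for $k\in[1,n-1]$, and $M_n=1$; (iii) if $k\ne1$ and $F_k$ involves $x_1$, then every monomial of $F_k-M_k$ is divisible by $x_1$; (iv) if $k\notin\{1,2\}$, $F_k$ does not involve $x_1$, and there is $i\in[2,k-1]$ such that $x_k$ divides $M_i$, then every monomial of $F_k-M_k$ is divisible by $x_i$. Under (i), $R[x_2,x'_2,\dots,x_n,x'_n]\subseteq R[x_1,x_2^{\pm1},\dots,x_n^{\pm1}]$; $\varphi$ is the restriction to $R[x_2,x'_2,\dots,x_n,x'_n]$ of the $R$-algebra homomorphism $R[x_1,x_2^{\pm1},\dots,x_n^{\pm1}]\to R[x_2^{\pm1},\dots,x_n^{\pm1}]$ with $x_1\mapsto0$, $x_i^{\pm1}\mapsto x_i^{\pm1}$ ($i\ge2$). $R^{st}[x_2,x'_2,\dots,x_n,x'_n]$ is the $R$-span of the monomials in $x_2,x'_2,\dots,x_n,x'_n$ containing no product $x_ix'_i$. For $y\in R[x_1^{\pm1},\dots,x_n^{\pm1}]$, $LT(y)$ is the sum of all terms (with nonzero coefficient) of the Laurent expansion of $y$ in $x_1,\dots,x_n$ having the smallest power of $x_1$. *)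

theory Defs
  imports "HOL-Library.Poly_Mapping" "HOL-Computational_Algebra.Factorial_Ring"
begin

text \<open>Laurent polynomials over a coefficient ring R in variables x_1, x_2, ...:
  finitely supported maps from integer exponent vectors to R.  Only the variables
  with index in {1..n} are used.  The transcendence basis x of the seed is identified
  with these formal variables (the whole statement lives in R[x_1^(+-1),...,x_n^(+-1)]).\<close>

type_synonym 'a lpoly = "(nat \<Rightarrow>\<^sub>0 int) \<Rightarrow>\<^sub>0 'a"

definition lconst :: "'a::zero \<Rightarrow> 'a lpoly" where
  "lconst c = Poly_Mapping.single 0 c"

definition xpow :: "nat \<Rightarrow> int \<Rightarrow> 'a::{zero,one} lpoly" where
  "xpow i m = Poly_Mapping.single (Poly_Mapping.single i m) 1"

definition xvar :: "nat \<Rightarrow> 'a::{zero,one} lpoly" where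
  "xvar i = xpow i 1"

definition xinv :: "nat \<Rightarrow> 'a::{zero,one} lpoly" where
  "xinv i = xpow i (-1)"

definition laurent_ring :: "nat \<Rightarrow> 'a::zero lpoly set" where
  "laurent_ring n = {p. \<forall>e\<in>Poly_Mapping.keys p. Poly_Mapping.keys e \<subseteq> {1..n}}"

definition poly_ring :: "nat \<Rightarrow> 'a::zero lpoly set" where
  "poly_ring n = {p. \<forall>e\<in>Poly_Mapping.keys p. Poly_Mapping.keys e \<subseteq> {1..n} \<and> (\<forall>i. 0 \<le> Poly_Mapping.lookup e i)}"

text \<open>The ring R[x_1,...,x_{k-1},(x'_k)^{-1},x_{k+1},...,x_n], where the formal
  variable in slot k plays the role of x'_k.\<close>
definition subst_ring :: "nat \<Rightarrow> nat \<Rightarrow> 'a::zero lpoly set" where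
  "subst_ring n k = {p. \<forall>e\<in>Poly_Mapping.keys p. Poly_Mapping.keys e \<subseteq> {1..n} \<and>
      (\<forall>i. i \<noteq> k \<longrightarrow> 0 \<le> Poly_Mapping.lookup e i) \<and> Poly_Mapping.lookup e k \<le> 0}"

definition dvd_in :: "'a::times set \<Rightarrow> 'a \<Rightarrow> 'a \<Rightarrow> bool" where
  "dvd_in S a b \<longleftrightarrow> (\<exists>c\<in>S. b = a * c)"

definition unit_in :: "'a::{times,one} set \<Rightarrow> 'a \<Rightarrow> bool" where
  "unit_in S u \<longleftrightarrow> u \<in> S \<and> (\<exists>v\<in>S. u * v = 1)"

definition irreducible_in :: "'a::{times,one,zero} set \<Rightarrow> 'a \<Rightarrow> bool" where
  "irreducible_in S p \<longleftrightarrow> p \<in> S \<and> p \<noteq> 0 \<and> \<not> unit_in S p \<and>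
     (\<forall>a\<in>S. \<forall>b\<in>S. p = a * b \<longrightarrow> unit_in S a \<or> unit_in S b)"

definition involves :: "'a::zero lpoly \<Rightarrow> nat \<Rightarrow> bool" where
  "involves p i \<longleftrightarrow> (\<exists>e\<in>Poly_Mapping.keys p. Poly_Mapping.lookup e i \<noteq> 0)"

text \<open>Substitution x_k \<leftarrow> q in a polynomial p (p with nonnegative exponents).\<close>
definition subst_var :: "nat \<Rightarrow> 'a::comm_ring_1 lpoly \<Rightarrow> 'a lpoly \<Rightarrow> 'a lpoly" where
  "subst_var k q p = (\<Sum>e\<in>Poly_Mapping.keys p.
      Poly_Mapping.single (e - Poly_Mapping.single k (Poly_Mapping.lookup e k)) (Poly_Mapping.lookup p e)
      * q ^ nat (Poly_Mapping.lookup e k))"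

definition LP_seed :: "nat \<Rightarrow> (nat \<Rightarrow> 'a::comm_ring_1 lpoly) \<Rightarrow> bool" where
  "LP_seed n F \<longleftrightarrow> (\<forall>i\<in>{1..n}.
      irreducible_in (poly_ring n) (F i) \<and>
      (\<forall>j\<in>{1..n}. \<not> dvd_in (poly_ring n) (xvar j) (F i)) \<and>
      \<not> involves (F i) i)"

text \<open>The exponent a_k in the definition of the exchange Laurent polynomial of F_j:
  maximal a with F_k^a dividing F_j|_{x_k <- F_k/x'_k} in
  R[x_1,...,(x'_k)^{-1},...,x_n].\<close>
definition exch_exp :: "nat \<Rightarrow> (nat \<Rightarrow> 'a::comm_ring_1 lpoly) \<Rightarrow> nat \<Rightarrow> nat \<Rightarrow> nat" where
  "exch_exp n F j k = (GREATEST a. dvd_in (subst_ring n k) (F k ^ a)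
       (subst_var k (F k * xinv k) (F j)))"

definition hatF :: "nat \<Rightarrow> (nat \<Rightarrow> 'a::comm_ring_1 lpoly) \<Rightarrow> nat \<Rightarrow> 'a lpoly" where
  "hatF n F j = F j * (\<Prod>k\<in>{1..n} - {j}. xinv k ^ exch_exp n F j k)"

definition xprime :: "nat \<Rightarrow> (nat \<Rightarrow> 'a::comm_ring_1 lpoly) \<Rightarrow> nat \<Rightarrow> 'a lpoly" where
  "xprime n F j = hatF n F j * xinv j"

definition lex_less :: "(nat \<Rightarrow>\<^sub>0 int) \<Rightarrow> (nat \<Rightarrow>\<^sub>0 int) \<Rightarrow> bool" where
  "lex_less e e' \<longleftrightarrow> (\<exists>i. (\<forall>j<i. Poly_Mapping.lookup e j = Poly_Mapping.lookup e' j) \<and> Poly_Mapping.lookup e i < Poly_Mapping.lookup e' i)"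

definition lexfirst_exp :: "'a::zero lpoly \<Rightarrow> (nat \<Rightarrow>\<^sub>0 int)" where
  "lexfirst_exp p = (THE e. e \<in> Poly_Mapping.keys p \<and> (\<forall>e'\<in>Poly_Mapping.keys p. e' \<noteq> e \<longrightarrow> lex_less e e'))"

definition lexfirst :: "'a::zero lpoly \<Rightarrow> 'a lpoly" where
  "lexfirst p = Poly_Mapping.single (lexfirst_exp p) (Poly_Mapping.lookup p (lexfirst_exp p))"

definition all_monos_div :: "'a::zero lpoly \<Rightarrow> nat \<Rightarrow> bool" where
  "all_monos_div p i \<longleftrightarrow> (\<forall>e\<in>Poly_Mapping.keys p. 1 \<le> Poly_Mapping.lookup e i)"

definition condition_1_2 :: "nat \<Rightarrow> (nat \<Rightarrow> 'a::comm_ring_1 lpoly) \<Rightarrow> bool" where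
  "condition_1_2 n F \<longleftrightarrow> (\<forall>k\<in>{1..n}.
     hatF n F k = F k \<and>
     Poly_Mapping.lookup (F k) (lexfirst_exp (F k)) = 1 \<and>
     Poly_Mapping.keys (lexfirst_exp (F k)) \<subseteq> {k+1..n} \<and>
     (k \<noteq> 1 \<and> involves (F k) 1 \<longrightarrow> all_monos_div (F k - lexfirst (F k)) 1) \<and>
     (\<forall>i\<in>{2..k-1}. k \<notin> {1,2} \<and> \<not> involves (F k) 1 \<and> 1 \<le> Poly_Mapping.lookup (lexfirst_exp (F i)) k
        \<longrightarrow> all_monos_div (F k - lexfirst (F k)) i))"

definition st_mono :: "nat \<Rightarrow> (nat \<Rightarrow> 'a::comm_ring_1 lpoly) \<Rightarrow> (nat \<Rightarrow> nat) \<Rightarrow> (nat \<Rightarrow> nat) \<Rightarrow> 'a lpoly" where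
  "st_mono n F a b = (\<Prod>i\<in>{2..n}. xvar i ^ a i * xprime n F i ^ b i)"

definition Rst :: "nat \<Rightarrow> (nat \<Rightarrow> 'a::comm_ring_1 lpoly) \<Rightarrow> 'a lpoly set" where
  "Rst n F = {p. \<exists>T c. finite T \<and>
       (\<forall>(a,b)\<in>T. \<forall>i\<in>{2..n}. a i = 0 \<or> b i = 0) \<and>
       p = (\<Sum>(a,b)\<in>T. lconst (c (a,b)) * st_mono n F a b)}"

text \<open>phi: x_1 \<mapsto> 0, x_i^{\<plusminus>1} \<mapsto> x_i^{\<plusminus>1} (applied to elements with nonnegative x_1-exponents)\<close>
definition phi :: "'a::comm_ring_1 lpoly \<Rightarrow> 'a lpoly" where
  "phi p = (\<Sum>e\<in>{e\<in>Poly_Mapping.keys p. Poly_Mapping.lookup e 1 = 0}. Poly_Mapping.single e (Poly_Mapping.lookup p e))"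

definition LT :: "'a::comm_ring_1 lpoly \<Rightarrow> 'a lpoly" where
  "LT y = (let m = Min ((\<lambda>e. Poly_Mapping.lookup e 1) ` Poly_Mapping.keys y) in
      (\<Sum>e\<in>{e\<in>Poly_Mapping.keys y. Poly_Mapping.lookup e 1 = m}. Poly_Mapping.single e (Poly_Mapping.lookup y e)))"

end

theory Submission
  imports Defs
begin

lemma lex_less_iff: "lex_less e e' \<longleftrightarrow> e < e'"
  by (simp add: lex_less_def less_poly_mapping.rep_eq less_fun_def) blast

definition geK :: "'k::linorder \<Rightarrow> ('k \<Rightarrow>\<^sub>0 'a::zero) \<Rightarrow> bool" where
  "geK m p \<longleftrightarrow> (\<forall>e\<in>Poly_Mapping.keys p. m \<le> e)"

lemma geK_mult:
  fixes p q :: "'a::comm_semiring_0 lpoly"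
  assumes "geK m p" "geK m' q" shows "geK (m+m') (p*q)"
  using assms keys_mult[of p q] unfolding geK_def by (force intro: add_mono)

lemma gtK_mult_left:
  fixes p q :: "'a::comm_semiring_0 lpoly"
  assumes "\<forall>e\<in>Poly_Mapping.keys p. m < e" "geK m' q" shows "m+m' \<notin> Poly_Mapping.keys (p*q)"
proof
  assume "m+m' \<in> Poly_Mapping.keys (p*q)"
  then obtain a b where "a \<in> Poly_Mapping.keys p" "b \<in> Poly_Mapping.keys q" "m+m' = a+b"
    using keys_mult[of p q] by blast
  moreover have "m + m' < a + b" using assms calculation unfolding geK_def
    by (meson add_less_le_mono)
  ultimately show False by simp
qed

definition LE :: "'a::comm_ring_1 lpoly \<Rightarrow> (nat \<Rightarrow>\<^sub>0 int) \<Rightarrow> bool" where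
  "LE p m \<longleftrightarrow> Poly_Mapping.lookup p m = 1 \<and> (\<forall>e\<in>Poly_Mapping.keys p. m \<le> e)"

lemma split_LE:
  fixes p :: "'a::comm_ring_1 lpoly"
  assumes "LE p m"
  shows "p = Poly_Mapping.single m 1 + (p - Poly_Mapping.single m 1)"
    "\<forall>e\<in>Poly_Mapping.keys (p - Poly_Mapping.single m 1). m < e"
proof -
  show "p = Poly_Mapping.single m 1 + (p - Poly_Mapping.single m 1)" by simp
  show "\<forall>e\<in>Poly_Mapping.keys (p - Poly_Mapping.single m 1). m < e"
  proof
    fix e assume e: "e \<in> Poly_Mapping.keys (p - Poly_Mapping.single m 1)"
    then have ne: "e \<noteq> m" using assms unfolding LE_def
      by (auto simp: in_keys_iff lookup_minus)
    then have "e \<in> Poly_Mapping.keys p" using e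
      by (auto simp: in_keys_iff lookup_minus lookup_single)
    then show "m < e" using assms ne unfolding LE_def by force
  qed
qed

lemma LE_mult:
  fixes p q :: "'a::comm_ring_1 lpoly"
  assumes "LE p m" "LE q m'" shows "LE (p*q) (m+m')"
proof -
  define p1 where "p1 = p - Poly_Mapping.single m 1"
  define q1 where "q1 = q - Poly_Mapping.single m' 1"
  have p: "p = Poly_Mapping.single m 1 + p1" and p1: "\<forall>e\<in>Poly_Mapping.keys p1. m < e"
    using split_LE[OF assms(1)] p1_def by auto
  have q: "q = Poly_Mapping.single m' 1 + q1" and q1: "\<forall>e\<in>Poly_Mapping.keys q1. m' < e"
    using split_LE[OF assms(2)] q1_def by auto
  have gs: "geK k (Poly_Mapping.single k (1::'a))" for k by (simp add: geK_def)
  have g1: "geK m' q1" using q1 by (auto simp: geK_def)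
  have g2: "geK m p1" using p1 by (auto simp: geK_def)
  have e: "p*q = Poly_Mapping.single (m+m') 1 + Poly_Mapping.single m 1 * q1 + p1 * Poly_Mapping.single m' 1 + p1 * q1"
    by (subst p, subst q) (simp add: algebra_simps mult_single)
  have z1: "m+m' \<notin> Poly_Mapping.keys (Poly_Mapping.single m 1 * q1)"
    using gtK_mult_left[OF q1 gs[of m]] by (simp add: add.commute mult.commute)
  have z2: "m+m' \<notin> Poly_Mapping.keys (p1 * Poly_Mapping.single m' 1)"
    using gtK_mult_left[OF p1 gs[of m']] by simp
  have z3: "m+m' \<notin> Poly_Mapping.keys (p1 * q1)"
    using gtK_mult_left[OF p1 g1] by simp
  have "Poly_Mapping.lookup (p*q) (m+m') = 1"
    using z1 z2 z3 unfolding e by (simp add: lookup_add in_keys_iff)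
  moreover have "geK (m+m') (p*q)"
    using geK_mult[OF _ _, of m p m' q] assms unfolding LE_def geK_def by blast
  ultimately show ?thesis unfolding LE_def geK_def by blast
qed

lemma LE_one: "LE (1::'a::comm_ring_1 lpoly) 0"
  by (simp add: LE_def)

lemma LE_pow:
  fixes p :: "'a::comm_ring_1 lpoly"
  assumes "LE p m" shows "\<exists>m'. LE (p^k) m' \<and> (\<forall>j. Poly_Mapping.lookup m' j = int k * Poly_Mapping.lookup m j)"
proof (induction k)
  case 0 show ?case by (intro exI[of _ 0]) (simp add: LE_one)
next
  case (Suc k)
  then obtain m' where "LE (p^k) m'" "\<forall>j. Poly_Mapping.lookup m' j = int k * Poly_Mapping.lookup m j" by blast
  then show ?case using LE_mult[OF assms \<open>LE (p^k) m'\<close>]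
    by (intro exI[of _ "m+m'"]) (simp add: lookup_add algebra_simps)
qed

lemma LE_unique: "LE (p::'a::comm_ring_1 lpoly) m \<Longrightarrow> LE p m' \<Longrightarrow> m = m'"
  unfolding LE_def by (metis in_keys_iff one_neq_zero order_antisym)

definition gexp :: "(nat \<Rightarrow> (nat \<Rightarrow>\<^sub>0 int)) \<Rightarrow> (nat \<Rightarrow> nat) \<Rightarrow> (nat \<Rightarrow> nat) \<Rightarrow> nat \<Rightarrow> nat \<Rightarrow> int" where
  "gexp M a b i j = int (a i) * (if j = i then 1 else 0) + int (b i) * (Poly_Mapping.lookup (M i) j - (if j = i then 1 else 0))"

lemma gexp_sum:
  assumes M: "\<forall>i\<in>{2..n}. Poly_Mapping.keys (M i) \<subseteq> {i+1..n}" and j: "j \<in> {2..n}"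
  shows "(\<Sum>i\<in>{2..n}. gexp M a b i j) = (\<Sum>i\<in>{2..<j}. int (b i) * Poly_Mapping.lookup (M i) j) + int (a j) - int (b j)"
proof -
  have split: "{2..n} = {2..<j} \<union> {j..n}" using j by auto
  have z: "\<forall>i\<in>{j..n}. Poly_Mapping.lookup (M i) j = 0"
  proof
    fix i assume i: "i \<in> {j..n}"
    then have "i \<in> {2..n}" using j by auto
    then have "j \<notin> Poly_Mapping.keys (M i)" using M i by fastforce
    then show "Poly_Mapping.lookup (M i) j = 0" by (simp add: in_keys_iff)
  qed
  have "(\<Sum>i\<in>{2..n}. gexp M a b i j) = (\<Sum>i\<in>{2..<j}. gexp M a b i j) + (\<Sum>i\<in>{j..n}. gexp M a b i j)"
    unfolding split by (rule sum.union_disjoint) auto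
  moreover have "(\<Sum>i\<in>{2..<j}. gexp M a b i j) = (\<Sum>i\<in>{2..<j}. int (b i) * Poly_Mapping.lookup (M i) j)"
    by (rule sum.cong) (auto simp: gexp_def)
  moreover have "(\<Sum>i\<in>{j..n}. gexp M a b i j) = (\<Sum>i\<in>{j..n}. if i = j then int (a j) - int (b j) else 0)"
    by (rule sum.cong) (use z in \<open>auto simp: gexp_def\<close>)
  moreover have "(\<Sum>i\<in>{j..n}. if i = j then int (a j) - int (b j) else 0) = int (a j) - int (b j)"
    using j by (simp add: sum.delta)
  ultimately show ?thesis by simp
qed

lemma gexp_inj:
  assumes M: "\<forall>i\<in>{2..n}. Poly_Mapping.keys (M i) \<subseteq> {i+1..n}"
    and st: "\<forall>i\<in>{2..n}. a i = 0 \<or> b i = 0" and st': "\<forall>i\<in>{2..n}. a' i = 0 \<or> b' i = 0"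
    and eq: "\<forall>j. (\<Sum>i\<in>{2..n}. gexp M a b i j) = (\<Sum>i\<in>{2..n}. gexp M a' b' i j)"
  shows "\<forall>i\<in>{2..n}. a i = a' i \<and> b i = b' i"
proof -
  have "j \<in> {2..n} \<longrightarrow> a j = a' j \<and> b j = b' j" for j
  proof (induction j rule: less_induct)
    case (less j)
    show ?case
    proof
      assume j: "j \<in> {2..n}"
      have ih: "(\<Sum>i\<in>{2..<j}. int (b i) * Poly_Mapping.lookup (M i) j) = (\<Sum>i\<in>{2..<j}. int (b' i) * Poly_Mapping.lookup (M i) j)"
        by (rule sum.cong) (use less j in auto)
      have "int (a j) - int (b j) = int (a' j) - int (b' j)"
        using eq[rule_format, of j] gexp_sum[OF M j, of a b] gexp_sum[OF M j, of a' b'] ih by simp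
      then show "a j = a' j \<and> b j = b' j" using st j st' by force
    qed
  qed
  then show ?thesis by blast
qed

lemma LE_prod:
  fixes f :: "nat \<Rightarrow> 'a::comm_ring_1 lpoly"
  assumes "finite I" "\<forall>i\<in>I. \<exists>m. LE (f i) m \<and> (\<forall>j. Poly_Mapping.lookup m j = g i j)"
  shows "\<exists>m. LE (prod f I) m \<and> (\<forall>j. Poly_Mapping.lookup m j = (\<Sum>i\<in>I. g i j))"
  using assms
proof (induction I rule: finite_induct)
  case empty show ?case by (intro exI[of _ 0]) (simp add: LE_one)
next
  case (insert x F)
  then obtain m where m: "LE (prod f F) m" "\<forall>j. Poly_Mapping.lookup m j = (\<Sum>i\<in>F. g i j)" by auto
  obtain m' where m': "LE (f x) m'" "\<forall>j. Poly_Mapping.lookup m' j = g x j" using insert by auto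
  show ?case using LE_mult[OF m'(1) m(1)] m m' insert
    by (intro exI[of _ "m'+m"]) (simp add: lookup_add)
qed

lemma lexfirst_min:
  fixes p :: "'a::zero lpoly"
  assumes "p \<noteq> 0" shows "lexfirst_exp p = Min (Poly_Mapping.keys p)"
proof -
  have fin: "finite (Poly_Mapping.keys p)" by simp
  have ne: "Poly_Mapping.keys p \<noteq> {}" using assms by simp
  let ?m = "Min (Poly_Mapping.keys p)"
  have P: "?m \<in> Poly_Mapping.keys p \<and> (\<forall>e'\<in>Poly_Mapping.keys p. e' \<noteq> ?m \<longrightarrow> lex_less ?m e')"
    using Min_in[OF fin ne] Min_le[OF fin] by (auto simp: lex_less_iff order.strict_iff_order)
  show ?thesis unfolding lexfirst_exp_def
  proof (rule the_equality)
    show "?m \<in> Poly_Mapping.keys p \<and> (\<forall>e'\<in>Poly_Mapping.keys p. e' \<noteq> ?m \<longrightarrow> lex_less ?m e')" by (rule P)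
    fix e assume "e \<in> Poly_Mapping.keys p \<and> (\<forall>e'\<in>Poly_Mapping.keys p. e' \<noteq> e \<longrightarrow> lex_less e e')"
    then show "e = ?m" using P by (metis lex_less_iff order.asym)
  qed
qed

lemma LE_lexfirst:
  fixes p :: "'a::comm_ring_1 lpoly"
  assumes "p \<noteq> 0" "Poly_Mapping.lookup p (lexfirst_exp p) = 1"
  shows "LE p (lexfirst_exp p)"
  using assms lexfirst_min[OF assms(1)] by (simp add: LE_def)

lemma LE_xpow: "LE (xpow i k :: 'a::comm_ring_1 lpoly) (Poly_Mapping.single i k)"
  by (simp add: LE_def xpow_def)

definition NN :: "'a::zero lpoly \<Rightarrow> bool" where
  "NN p \<longleftrightarrow> (\<forall>e\<in>Poly_Mapping.keys p. 0 \<le> Poly_Mapping.lookup e 1)"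

lemma NN_mult: "NN (p::'a::comm_semiring_0 lpoly) \<Longrightarrow> NN q \<Longrightarrow> NN (p*q)"
  unfolding NN_def using keys_mult[of p q] by (force simp: lookup_add)

lemma NN_one: "NN (1::'a::comm_semiring_1 lpoly)"
  by (simp add: NN_def)

lemma NN_pow: "NN (p::'a::comm_semiring_1 lpoly) \<Longrightarrow> NN (p^k)"
  by (induction k) (auto simp: NN_one NN_mult)

lemma NN_prod: "(\<And>i. i\<in>I \<Longrightarrow> NN (f i :: 'a::comm_semiring_1 lpoly)) \<Longrightarrow> NN (prod f I)"
  by (induction I rule: infinite_finite_induct) (auto simp: NN_one NN_mult)

lemma NN_sum: "(\<And>i. i\<in>I \<Longrightarrow> NN (f i :: 'a::comm_monoid_add lpoly)) \<Longrightarrow> NN (sum f I)"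
proof (induction I rule: infinite_finite_induct)
  case (insert x F) then show ?case using keys_add[of "f x" "sum f F"] by (auto simp: NN_def)
qed (auto simp: NN_def)

lemma NN_xpow: "i \<noteq> 1 \<Longrightarrow> NN (xpow i k :: 'a::comm_ring_1 lpoly)"
  by (simp add: NN_def xpow_def lookup_single)

lemma NN_lconst: "NN (lconst c)"
  by (simp add: NN_def lconst_def)

lemma seed_facts:
  fixes F :: "nat \<Rightarrow> 'a::comm_ring_1 lpoly"
  assumes "LP_seed n F" "condition_1_2 n F" "i \<in> {1..n}"
  shows "F i \<noteq> 0" "LE (F i) (lexfirst_exp (F i))" "NN (F i)"
    "Poly_Mapping.keys (lexfirst_exp (F i)) \<subseteq> {i+1..n}"
    "xprime n F i = F i * xpow i (-1)"
proof -
  have irr: "irreducible_in (poly_ring n) (F i)" using assms(1,3) unfolding LP_seed_def by blast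
  then show nz: "F i \<noteq> 0" unfolding irreducible_in_def by blast
  have c: "hatF n F i = F i" "Poly_Mapping.lookup (F i) (lexfirst_exp (F i)) = 1"
    "Poly_Mapping.keys (lexfirst_exp (F i)) \<subseteq> {i+1..n}"
    using assms(2,3) unfolding condition_1_2_def by blast+
  show "LE (F i) (lexfirst_exp (F i))" using LE_lexfirst[OF nz c(2)] .
  show "Poly_Mapping.keys (lexfirst_exp (F i)) \<subseteq> {i+1..n}" using c(3) .
  show "xprime n F i = F i * xpow i (-1)" using c(1) by (simp add: xprime_def xinv_def)
  have "F i \<in> poly_ring n" using irr unfolding irreducible_in_def by blast
  then show "NN (F i)" unfolding poly_ring_def NN_def by blast
qed

lemma st_mono_props:
  fixes F :: "nat \<Rightarrow> 'a::comm_ring_1 lpoly"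
  assumes "LP_seed n F" "condition_1_2 n F"
  shows "\<exists>m. LE (st_mono n F a b) m \<and> (\<forall>j. Poly_Mapping.lookup m j = (\<Sum>i\<in>{2..n}. gexp (\<lambda>i. lexfirst_exp (F i)) a b i j))"
    "NN (st_mono n F a b)"
proof -
  have one: "\<exists>m. LE (xvar i ^ a i * xprime n F i ^ b i) m \<and> (\<forall>j. Poly_Mapping.lookup m j = gexp (\<lambda>i. lexfirst_exp (F i)) a b i j)"
    and nn: "NN (xvar i ^ a i * xprime n F i ^ b i)"
    if i: "i \<in> {2..n}" for i
  proof -
    have i1: "i \<in> {1..n}" using i by auto
    note sf = seed_facts[OF assms i1]
    have Lp: "LE (xprime n F i) (lexfirst_exp (F i) + Poly_Mapping.single i (-1))"
      unfolding sf(5) by (rule LE_mult[OF sf(2) LE_xpow])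
    obtain m1 where m1: "LE (xvar i ^ a i :: 'a lpoly) m1" "\<forall>j. Poly_Mapping.lookup m1 j = int (a i) * Poly_Mapping.lookup (Poly_Mapping.single i 1) j"
      using LE_pow[OF LE_xpow[of i 1], of "a i"] unfolding xvar_def by blast
    obtain m2 where m2: "LE (xprime n F i ^ b i) m2" "\<forall>j. Poly_Mapping.lookup m2 j = int (b i) * Poly_Mapping.lookup (lexfirst_exp (F i) + Poly_Mapping.single i (-1)) j"
      using LE_pow[OF Lp, of "b i"] by blast
    show "\<exists>m. LE (xvar i ^ a i * xprime n F i ^ b i) m \<and> (\<forall>j. Poly_Mapping.lookup m j = gexp (\<lambda>i. lexfirst_exp (F i)) a b i j)"
      using LE_mult[OF m1(1) m2(1)] m1(2) m2(2)
      by (intro exI[of _ "m1+m2"]) (auto simp: lookup_add lookup_single when_def gexp_def)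
    have "i \<noteq> 1" using i by auto
    then show "NN (xvar i ^ a i * xprime n F i ^ b i)"
      unfolding sf(5) xvar_def by (intro NN_mult NN_pow NN_xpow sf(3))
  qed
  show "\<exists>m. LE (st_mono n F a b) m \<and> (\<forall>j. Poly_Mapping.lookup m j = (\<Sum>i\<in>{2..n}. gexp (\<lambda>i. lexfirst_exp (F i)) a b i j))"
    unfolding st_mono_def by (rule LE_prod) (use one in auto)
  show "NN (st_mono n F a b)" unfolding st_mono_def by (rule NN_prod) (use nn in auto)
qed

lemma lookup_lconst_mult: "Poly_Mapping.lookup (lconst d * (Q::'a::comm_semiring_1 lpoly)) e = d * Poly_Mapping.lookup Q e"
  unfolding lconst_def mult_map_scale_conv_mult[symmetric] by (simp add: map.rep_eq when_def)

lemma Rst_core: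
  fixes F :: "nat \<Rightarrow> 'a::comm_ring_1 lpoly"
  assumes seed: "LP_seed n F" "condition_1_2 n F" and cR: "c \<in> Rst n F" and nz: "c \<noteq> 0"
  shows "\<exists>v. Poly_Mapping.lookup v 1 = 0 \<and> Poly_Mapping.lookup c v \<noteq> 0"
proof -
  obtain T co where T: "finite T" "\<forall>(a,b)\<in>T. \<forall>i\<in>{2..n}. a i = 0 \<or> b i = 0"
    and c: "c = (\<Sum>(a,b)\<in>T. lconst (co (a,b)) * st_mono n F a b)"
    using cR unfolding Rst_def by blast
  define M where "M = (\<lambda>i. lexfirst_exp (F i))"
  have Mk: "\<forall>i\<in>{2..n}. Poly_Mapping.keys (M i) \<subseteq> {i+1..n}"
    using seed_facts(4)[OF seed] unfolding M_def by auto
  define st where "st = (\<lambda>t. st_mono n F (fst t) (snd t))"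
  define P where "P = (\<lambda>t m. LE (st t) m \<and> (\<forall>j. Poly_Mapping.lookup m j = (\<Sum>i\<in>{2..n}. gexp M (fst t) (snd t) i j)))"
  define E where "E = (\<lambda>t. SOME m. P t m)"
  have PE: "P t (E t)" for t
    unfolding E_def by (rule someI_ex) (use st_mono_props(1)[OF seed] in \<open>auto simp: P_def st_def M_def\<close>)
  have LEt: "LE (st t) (E t)" for t using PE[of t] by (simp add: P_def)
  have stEq: "st t = st t'" if "t \<in> T" "t' \<in> T" "E t = E t'" for t t'
  proof -
    have "\<forall>j. (\<Sum>i\<in>{2..n}. gexp M (fst t) (snd t) i j) = (\<Sum>i\<in>{2..n}. gexp M (fst t') (snd t') i j)"
    proof
      fix j
      have "(\<Sum>i\<in>{2..n}. gexp M (fst t) (snd t) i j) = Poly_Mapping.lookup (E t) j" using PE[of t] by (simp add: P_def)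
      also have "\<dots> = Poly_Mapping.lookup (E t') j" using that(3) by simp
      also have "\<dots> = (\<Sum>i\<in>{2..n}. gexp M (fst t') (snd t') i j)" using PE[of t'] by (simp add: P_def)
      finally show "(\<Sum>i\<in>{2..n}. gexp M (fst t) (snd t) i j) = (\<Sum>i\<in>{2..n}. gexp M (fst t') (snd t') i j)" .
    qed
    moreover have "\<forall>i\<in>{2..n}. fst t i = 0 \<or> snd t i = 0" "\<forall>i\<in>{2..n}. fst t' i = 0 \<or> snd t' i = 0"
      using T(2) that(1,2) by (auto simp: split_beta)
    ultimately have "\<forall>i\<in>{2..n}. fst t i = fst t' i \<and> snd t i = snd t' i"
      using gexp_inj[OF Mk] by blast
    then show ?thesis unfolding st_def st_mono_def by (intro prod.cong) auto
  qed
  have E1: "Poly_Mapping.lookup (E t) 1 = 0" for t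
  proof -
    have "Poly_Mapping.lookup (E t) 1 = (\<Sum>i\<in>{2..n}. gexp M (fst t) (snd t) i 1)"
      using PE[of t] by (simp add: P_def)
    also have "\<dots> = 0"
    proof (rule sum.neutral, rule ballI)
      fix i assume i: "i \<in> {2..n}"
      then have "1 \<notin> Poly_Mapping.keys (M i)" using Mk by fastforce
      then show "gexp M (fst t) (snd t) i 1 = 0" using i by (simp add: gexp_def in_keys_iff)
    qed
    finally show ?thesis .
  qed
  define V where "V = E ` T"
  define d where "d = (\<lambda>v. \<Sum>t\<in>{t\<in>T. E t = v}. co t)"
  have lc: "Poly_Mapping.lookup c e = (\<Sum>v\<in>V. \<Sum>t\<in>{t\<in>T. E t = v}. co t * Poly_Mapping.lookup (st t) e)" for e
  proof -
    have "Poly_Mapping.lookup c e = (\<Sum>t\<in>T. co t * Poly_Mapping.lookup (st t) e)"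
      unfolding c lookup_sum by (rule sum.cong) (auto simp: lookup_lconst_mult st_def)
    also have "\<dots> = (\<Sum>v\<in>V. \<Sum>t\<in>{t\<in>T. E t = v}. co t * Poly_Mapping.lookup (st t) e)"
      unfolding V_def by (rule sum.image_gen[OF T(1)])
    finally show ?thesis .
  qed
  have grp: "\<exists>t0\<in>T. E t0 = v \<and> (\<Sum>t\<in>{t\<in>T. E t = v}. co t * Poly_Mapping.lookup (st t) e) = d v * Poly_Mapping.lookup (st t0) e"
    if vV: "v \<in> V" for v e
  proof -
    obtain t0 where t0: "t0 \<in> T" "E t0 = v" using vV unfolding V_def by blast
    have "(\<Sum>t\<in>{t\<in>T. E t = v}. co t * Poly_Mapping.lookup (st t) e) = (\<Sum>t\<in>{t\<in>T. E t = v}. co t * Poly_Mapping.lookup (st t0) e)"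
      by (rule sum.cong) (use stEq[OF _ t0(1)] t0(2) in simp_all)
    also have "\<dots> = d v * Poly_Mapping.lookup (st t0) e" unfolding d_def by (simp add: sum_distrib_right)
    finally show ?thesis using t0 by blast
  qed
  have finV: "finite V" using T(1) V_def by simp
  show ?thesis
  proof (cases "{v\<in>V. d v \<noteq> 0} = {}")
    case True
    have "Poly_Mapping.lookup c e = 0" for e
      unfolding lc
    proof (rule sum.neutral, rule ballI)
      fix v assume vV: "v \<in> V"
      obtain t0 where "(\<Sum>t\<in>{t\<in>T. E t = v}. co t * Poly_Mapping.lookup (st t) e) = d v * Poly_Mapping.lookup (st t0) e"
        using grp[OF vV, of e] by blast
      moreover have "d v = 0" using True vV by blast
      ultimately show "(\<Sum>t\<in>{t\<in>T. E t = v}. co t * Poly_Mapping.lookup (st t) e) = 0" by simp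
    qed
    then have "c = 0" by (intro poly_mapping_eqI) simp
    then show ?thesis using nz by simp
  next
    case False
    define v0 where "v0 = Min {v\<in>V. d v \<noteq> 0}"
    have fin: "finite {v\<in>V. d v \<noteq> 0}" using finV by simp
    have v0: "v0 \<in> V" "d v0 \<noteq> 0" using Min_in[OF fin False] v0_def by auto
    have v0min: "v \<in> V \<Longrightarrow> d v \<noteq> 0 \<Longrightarrow> v0 \<le> v" for v using Min_le[OF fin] v0_def by auto
    have inner: "(\<Sum>t\<in>{t\<in>T. E t = v}. co t * Poly_Mapping.lookup (st t) v0) = (if v = v0 then d v0 else 0)"
      if v: "v \<in> V" for v
    proof (cases "v = v0")
      case True
      have "(\<Sum>t\<in>{t\<in>T. E t = v}. co t * Poly_Mapping.lookup (st t) v0) = (\<Sum>t\<in>{t\<in>T. E t = v}. co t)"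
        by (rule sum.cong) (use LEt True in \<open>auto simp: LE_def\<close>)
      then show ?thesis using True d_def by simp
    next
      case ne: False
      show ?thesis
      proof (cases "d v = 0")
        case True
        obtain t0 where "(\<Sum>t\<in>{t\<in>T. E t = v}. co t * Poly_Mapping.lookup (st t) v0) = d v * Poly_Mapping.lookup (st t0) v0"
          using grp[OF v, of v0] by blast
        then show ?thesis using True ne by simp
      next
        case False
        then have lt: "v0 < v" using v0min[OF v] ne by (simp add: order.strict_iff_order)
        have "(\<Sum>t\<in>{t\<in>T. E t = v}. co t * Poly_Mapping.lookup (st t) v0) = 0"
        proof (rule sum.neutral, rule ballI)
          fix t assume "t \<in> {t\<in>T. E t = v}"
          then have "E t = v" by simp
          have "v0 \<notin> Poly_Mapping.keys (st t)"
          proof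
            assume "v0 \<in> Poly_Mapping.keys (st t)"
            then have "E t \<le> v0" using LEt[of t] unfolding LE_def by blast
            then show False using lt \<open>E t = v\<close> by simp
          qed
          then show "co t * Poly_Mapping.lookup (st t) v0 = 0" by (simp add: in_keys_iff)
        qed
        then show ?thesis using ne by simp
      qed
    qed
    have "Poly_Mapping.lookup c v0 = (\<Sum>v\<in>V. if v = v0 then d v0 else 0)"
      unfolding lc by (rule sum.cong) (use inner in auto)
    also have "\<dots> = d v0" using v0(1) finV by (simp add: sum.delta)
    finally have "Poly_Mapping.lookup c v0 \<noteq> 0" using v0 by simp
    moreover have "Poly_Mapping.lookup v0 1 = 0" using v0(1) E1 V_def by auto
    ultimately show ?thesis by blast
  qed
qed

lemma Rst_NN:
  fixes F :: "nat \<Rightarrow> 'a::comm_ring_1 lpoly"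
  assumes seed: "LP_seed n F" "condition_1_2 n F" and cR: "c \<in> Rst n F"
  shows "NN c"
proof -
  obtain T co where c: "c = (\<Sum>(a,b)\<in>T. lconst (co (a,b)) * st_mono n F a b)"
    using cR unfolding Rst_def by blast
  show ?thesis unfolding c
    by (rule NN_sum) (auto intro!: NN_mult NN_lconst st_mono_props(2)[OF seed])
qed

lemma lookup_mult_single1:
  fixes p :: "('k::ab_group_add \<Rightarrow>\<^sub>0 'a::comm_semiring_1)"
  shows "Poly_Mapping.lookup (p * Poly_Mapping.single k 1) e = Poly_Mapping.lookup p (e - k)"
proof -
  have "Poly_Mapping.lookup (p * Poly_Mapping.single k 1) e = (\<Sum>l. Poly_Mapping.lookup p l * (1 when e = l + k))"
  proof -
    have h: "(\<Sum>q. (1::'a) when k = q \<and> e = l + q) = (1 when e = l + k)" for l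
    proof -
      have "(\<Sum>q. (1::'a) when k = q \<and> e = l + q) = (\<Sum>q. ((1::'a) when e = l + q) when q = k)"
        by (rule Sum_any.cong) (auto simp: when_def)
      also have "\<dots> = (1 when e = l + k)" by (rule Sum_any_when_equal)
      finally show ?thesis .
    qed
    show ?thesis by (simp add: lookup_mult lookup_single when_when h)
  qed
  also have "\<dots> = (\<Sum>l. Poly_Mapping.lookup p l when l = e - k)"
    by (rule Sum_any.cong) (auto simp: when_def eq_diff_eq)
  also have "\<dots> = Poly_Mapping.lookup p (e - k)" by simp
  finally show ?thesis .
qed

lemma lookup_filter_sum:
  fixes p :: "'a::comm_monoid_add lpoly"
  shows "Poly_Mapping.lookup (\<Sum>e\<in>{e\<in>Poly_Mapping.keys p. P e}. Poly_Mapping.single e (Poly_Mapping.lookup p e)) e'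
     = (if P e' then Poly_Mapping.lookup p e' else 0)"
proof -
  have "Poly_Mapping.lookup (\<Sum>e\<in>{e\<in>Poly_Mapping.keys p. P e}. Poly_Mapping.single e (Poly_Mapping.lookup p e)) e'
      = (\<Sum>e\<in>{e\<in>Poly_Mapping.keys p. P e}. if e = e' then Poly_Mapping.lookup p e else 0)"
    unfolding lookup_sum by (rule sum.cong) (auto simp: lookup_single when_def)
  also have "\<dots> = (if e' \<in> {e\<in>Poly_Mapping.keys p. P e} then Poly_Mapping.lookup p e' else 0)"
    by (simp add: sum.delta')
  also have "\<dots> = (if P e' then Poly_Mapping.lookup p e' else 0)"
    by (auto simp: in_keys_iff)
  finally show ?thesis .
qed

lemma lookup_sub1: "Poly_Mapping.lookup (e - Poly_Mapping.single (1::nat) (m::int)) 1 = Poly_Mapping.lookup e 1 - m"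
  by (simp add: lookup_minus)

theorem lemma4p19:
  fixes n :: nat and F :: "nat \<Rightarrow> ('r::{factorial_semiring, idom, ring_char_0}) lpoly"
    and c :: "int \<Rightarrow> 'r lpoly" and a b :: int
  assumes "n \<ge> 2"
    and "LP_seed n F"
    and "condition_1_2 n F"
    and "a \<le> b"
    and "\<forall>m\<in>{a..b}. c m \<in> Rst n F"
    and "c a \<noteq> 0"
  shows "LT (\<Sum>m\<in>{a..b}. c m * xpow 1 m) = phi (c a) * xpow 1 a"
proof -
  define y where "y = (\<Sum>m\<in>{a..b}. c m * xpow 1 m)"
  have NNc: "NN (c m)" if "m \<in> {a..b}" for m
    using Rst_NN[OF assms(2,3)] assms(5) that by blast
  have ly: "Poly_Mapping.lookup y e = (\<Sum>m\<in>{a..b}. Poly_Mapping.lookup (c m) (e - Poly_Mapping.single 1 m))" for e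
    unfolding y_def lookup_sum xpow_def by (simp add: lookup_mult_single1)
  have zero: "Poly_Mapping.lookup (c m) f = 0" if "m \<in> {a..b}" "Poly_Mapping.lookup f 1 < 0" for m f
    using NNc[OF that(1)] that(2) unfolding NN_def by (metis in_keys_iff not_le)
  have K3: "Poly_Mapping.lookup y e = Poly_Mapping.lookup (c a) (e - Poly_Mapping.single 1 a)"
    if "Poly_Mapping.lookup e 1 = a" for e
  proof -
    have "Poly_Mapping.lookup y e = (\<Sum>m\<in>{a..b}. if m = a then Poly_Mapping.lookup (c a) (e - Poly_Mapping.single 1 a) else 0)"
      unfolding ly
    proof (rule sum.cong)
      fix m assume m: "m \<in> {a..b}"
      show "Poly_Mapping.lookup (c m) (e - Poly_Mapping.single 1 m) = (if m = a then Poly_Mapping.lookup (c a) (e - Poly_Mapping.single 1 a) else 0)"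
      proof (cases "m = a")
        case False
        then have "Poly_Mapping.lookup (e - Poly_Mapping.single 1 m) 1 < 0" using m that by (simp add: lookup_minus)
        then show ?thesis using zero[OF m] False by simp
      qed simp
    qed simp
    also have "\<dots> = Poly_Mapping.lookup (c a) (e - Poly_Mapping.single 1 a)" using assms(4) by (simp add: sum.delta)
    finally show ?thesis .
  qed
  have K1: "a \<le> Poly_Mapping.lookup e 1" if "e \<in> Poly_Mapping.keys y" for e
  proof -
    have "(\<Sum>m\<in>{a..b}. Poly_Mapping.lookup (c m) (e - Poly_Mapping.single 1 m)) \<noteq> 0" using that ly by (simp add: in_keys_iff)
    then obtain m where m: "m \<in> {a..b}" "Poly_Mapping.lookup (c m) (e - Poly_Mapping.single 1 m) \<noteq> 0"
      by (meson sum.neutral)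
    then have "\<not> Poly_Mapping.lookup (e - Poly_Mapping.single 1 m) 1 < 0" using zero by blast
    then show ?thesis using m(1) by (simp add: lookup_minus)
  qed
  obtain v where v: "Poly_Mapping.lookup v 1 = 0" "Poly_Mapping.lookup (c a) v \<noteq> 0"
    using Rst_core[OF assms(2,3) _ assms(6)] assms(4,5) by auto
  define e0 where "e0 = v + Poly_Mapping.single 1 a"
  have e01: "Poly_Mapping.lookup e0 1 = a" using v(1) by (simp add: e0_def lookup_add)
  have e0k: "e0 \<in> Poly_Mapping.keys y" using K3[OF e01] v(2) by (simp add: e0_def in_keys_iff)
  have Mn: "Min ((\<lambda>e. Poly_Mapping.lookup e 1) ` Poly_Mapping.keys y) = a"
  proof (rule Min_eqI)
    show "finite ((\<lambda>e. Poly_Mapping.lookup e 1) ` Poly_Mapping.keys y)" by simp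
    show "\<And>z. z \<in> (\<lambda>e. Poly_Mapping.lookup e 1) ` Poly_Mapping.keys y \<Longrightarrow> a \<le> z" using K1 by blast
    show "a \<in> (\<lambda>e. Poly_Mapping.lookup e 1) ` Poly_Mapping.keys y" using e0k e01 by force
  qed
  have LTy: "LT y = (\<Sum>e\<in>{e\<in>Poly_Mapping.keys y. Poly_Mapping.lookup e 1 = a}. Poly_Mapping.single e (Poly_Mapping.lookup y e))"
    unfolding LT_def Mn by simp
  show ?thesis unfolding y_def[symmetric]
  proof (rule poly_mapping_eqI)
    fix e
    have "Poly_Mapping.lookup (LT y) e = (if Poly_Mapping.lookup e 1 = a then Poly_Mapping.lookup y e else 0)"
      unfolding LTy by (rule lookup_filter_sum)
    also have "\<dots> = (if Poly_Mapping.lookup e 1 = a then Poly_Mapping.lookup (c a) (e - Poly_Mapping.single 1 a) else 0)"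
      using K3 by simp
    also have "\<dots> = Poly_Mapping.lookup (phi (c a)) (e - Poly_Mapping.single 1 a)"
      unfolding phi_def lookup_filter_sum by (simp add: lookup_minus)
    also have "\<dots> = Poly_Mapping.lookup (phi (c a) * xpow 1 a) e"
      by (simp add: xpow_def lookup_mult_single1)
    finally show "Poly_Mapping.lookup (LT y) e = Poly_Mapping.lookup (phi (c a) * xpow 1 a) e" .
  qed
qed

end
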